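(* Let $X=\{x_j:j\in J\}\subset\mathbb{R}^2$ be finite with $n=|J|$, quadratic min-power centre $s^*$, centroid $M$, and let $r\in J$ be such that $x_r$ is a point of $X$ farthest from $M$. The following are equivalent: (1) $|\Lambda|=1$; (2) $s^*=M_r$; (3) $M_j\in V(x_j)$ for some $j\in J$.
   Context: $P(s)=\sum_{i\in J}\|s-x_i\|^2+\max_{i\in J}\|s-x_i\|^2$; $s^*$ is its unique minimiser; $M=\frac1n\sum_i x_i$; $M_j=\frac{1}{n+1}\big(x_j+\sum_{i\in J}x_i\big)$; $V(x_j)=\{s:\|s-x_j\|=\max_{i\in J}\|s-x_i\|\}$ (the region of $x_j$ in the farthest point Voronoi diagram). A KKT multiplier vector for $s^*$ is $(\lambda_j)_{j\in J}$ with $\lambda_j\geq0$, $\sum_j\lambda_j=1$, $s^*=\sum_j\lambda_jM_j$, and $\lambda_j\big(\|s^*-x_j\|-\max_{i\in J}\|s^*-x_i\|\big)=0$ for all $j$. $|\Lambda|$ denotes the minimum, over all KKT multiplier vectors for $s^*$, of the number of nonzero entries. *)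

theory Defs
  imports "HOL-Analysis.Analysis"
begin

definition maxdist :: "('j \<Rightarrow> real^2) \<Rightarrow> 'j set \<Rightarrow> real^2 \<Rightarrow> real" where
  "maxdist x J s = Max ((\<lambda>i. norm (s - x i)) ` J)"

definition P :: "('j \<Rightarrow> real^2) \<Rightarrow> 'j set \<Rightarrow> real^2 \<Rightarrow> real" where
  "P x J s = (\<Sum>i\<in>J. (norm (s - x i))\<^sup>2) + (maxdist x J s)\<^sup>2"

definition centroid :: "('j \<Rightarrow> real^2) \<Rightarrow> 'j set \<Rightarrow> real^2" where
  "centroid x J = (1 / real (card J)) *\<^sub>R (\<Sum>i\<in>J. x i)"

definition Mj :: "('j \<Rightarrow> real^2) \<Rightarrow> 'j set \<Rightarrow> 'j \<Rightarrow> real^2" where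
  "Mj x J j = (1 / (real (card J) + 1)) *\<^sub>R (x j + (\<Sum>i\<in>J. x i))"

definition Vreg :: "('j \<Rightarrow> real^2) \<Rightarrow> 'j set \<Rightarrow> 'j \<Rightarrow> (real^2) set" where
  "Vreg x J j = {s. norm (s - x j) = maxdist x J s}"

definition is_KKT :: "('j \<Rightarrow> real^2) \<Rightarrow> 'j set \<Rightarrow> real^2 \<Rightarrow> ('j \<Rightarrow> real) \<Rightarrow> bool" where
  "is_KKT x J s lam \<longleftrightarrow>
     (\<forall>j\<in>J. lam j \<ge> 0) \<and> (\<Sum>j\<in>J. lam j) = 1 \<and>
     s = (\<Sum>j\<in>J. lam j *\<^sub>R Mj x J j) \<and>
     (\<forall>j\<in>J. lam j * (norm (s - x j) - maxdist x J s) = 0)"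

definition Lambda_card :: "('j \<Rightarrow> real^2) \<Rightarrow> 'j set \<Rightarrow> real^2 \<Rightarrow> nat" where
  "Lambda_card x J s = (LEAST k. \<exists>lam. is_KKT x J s lam \<and> card {j\<in>J. lam j \<noteq> 0} = k)"

end

theory Submission
  imports Defs
begin

lemma sq_expand:
  fixes a v y :: "real^2"
  shows "(norm (a + v - y))\<^sup>2 = (norm (a - y))\<^sup>2 + 2 * inner (a - y) v + (norm v)\<^sup>2"
proof -
  have "a + v - y = (a - y) + v" by simp
  then show ?thesis by (simp only: power2_norm_eq_inner inner_add_left inner_add_right inner_commute)
qed

lemma expand:
  fixes x :: "'j \<Rightarrow> real^2" and a v :: "real^2"
  assumes "finite J"
  shows "(\<Sum>k\<in>J. (norm (a + v - x k))\<^sup>2) + (norm (a + v - x i))\<^sup>2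
     = (\<Sum>k\<in>J. (norm (a - x k))\<^sup>2) + (norm (a - x i))\<^sup>2
       + 2 * inner ((real (card J) + 1) *\<^sub>R a - sum x J - x i) v + (real (card J) + 1) * (norm v)\<^sup>2"
proof -
  have "(\<Sum>k\<in>J. (norm (a + v - x k))\<^sup>2) = (\<Sum>k\<in>J. (norm (a - x k))\<^sup>2 + 2 * inner (a - x k) v + (norm v)\<^sup>2)"
    by (simp add: sq_expand)
  also have "\<dots> = (\<Sum>k\<in>J. (norm (a - x k))\<^sup>2) + 2 * (\<Sum>k\<in>J. inner (a - x k) v) + real (card J) * (norm v)\<^sup>2"
    by (simp add: sum.distrib sum_distrib_left)
  also have "(\<Sum>k\<in>J. inner (a - x k) v) = inner (real (card J) *\<^sub>R a - sum x J) v"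
    by (simp add: inner_sum_left[symmetric] sum_subtractf inner_diff_left)
  finally show ?thesis
    by (simp add: sq_expand inner_diff_left inner_add_left algebra_simps)
qed

lemma maxdist_ge:
  assumes "finite J" "i \<in> J"
  shows "norm (s - x i) \<le> maxdist x J s"
  unfolding maxdist_def using assms by (intro Max_ge) auto

lemma maxdist_in:
  assumes "finite J" "J \<noteq> {}"
  shows "\<exists>i\<in>J. maxdist x J s = norm (s - x i)"
proof -
  have "Max ((\<lambda>i. norm (s - x i)) ` J) \<in> (\<lambda>i. norm (s - x i)) ` J"
    using assms by (intro Max_in) auto
  then show ?thesis unfolding maxdist_def by auto
qed

lemma descent:
  fixes x :: "'j \<Rightarrow> real^2"
  assumes fin: "finite J" and ne: "J \<noteq> {}"
    and act: "\<forall>i\<in>J. norm (s - x i) = maxdist x J s \<longrightarrow>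
              inner ((real (card J) + 1) *\<^sub>R s - sum x J - x i) v < 0"
  shows "\<exists>t. P x J t < P x J s"
proof -
  define R where "R = maxdist x J s"
  define K where "K = (real (card J) + 1) * (norm v)\<^sup>2"
  define a where "a i = inner ((real (card J) + 1) *\<^sub>R s - sum x J - x i) v" for i
  have ev: "\<forall>\<^sub>F h in at_right (0::real). (norm (s - x i))\<^sup>2 + (2 * a i * h + K * h\<^sup>2) < R\<^sup>2"
    if i: "i \<in> J" for i
  proof (cases "norm (s - x i) = R")
    case True
    have neg: "a i < 0" using act i True unfolding R_def a_def by auto
    have tl: "((\<lambda>h. 2 * a i + K * h) \<longlongrightarrow> 2 * a i + K * 0) (at_right (0::real))"
      by (intro tendsto_intros)
    have "2 * a i + K * 0 < 0" using neg by simp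
    from order_tendstoD(2)[OF tl this]
    have "\<forall>\<^sub>F h in at_right (0::real). 2 * a i + K * h < 0" .
    then show ?thesis using eventually_at_right_less
    proof (rule eventually_elim2)
      fix h :: real assume "2 * a i + K * h < 0" "0 < h"
      then have "h * (2 * a i + K * h) < 0" by (simp add: mult_pos_neg)
      then show "(norm (s - x i))\<^sup>2 + (2 * a i * h + K * h\<^sup>2) < R\<^sup>2"
        using True by (simp add: algebra_simps power2_eq_square)
    qed
  next
    case False
    have "norm (s - x i) \<le> R" using maxdist_ge[OF fin i] unfolding R_def .
    with False have lt: "norm (s - x i) < R" by simp
    then have lt2: "(norm (s - x i))\<^sup>2 < R\<^sup>2"
      by (intro power_strict_mono) auto
    have tl: "((\<lambda>h. 2 * a i * h + K * h\<^sup>2) \<longlongrightarrow> 2 * a i * 0 + K * 0\<^sup>2) (at_right (0::real))"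
      by (intro tendsto_intros)
    have "2 * a i * 0 + K * 0\<^sup>2 < R\<^sup>2 - (norm (s - x i))\<^sup>2" using lt2 by simp
    from order_tendstoD(2)[OF tl this]
    have "\<forall>\<^sub>F h in at_right (0::real). 2 * a i * h + K * h\<^sup>2 < R\<^sup>2 - (norm (s - x i))\<^sup>2" .
    then show ?thesis by eventually_elim simp
  qed
  then have evall: "\<forall>\<^sub>F h in at_right (0::real). \<forall>i\<in>J. (norm (s - x i))\<^sup>2 + (2 * a i * h + K * h\<^sup>2) < R\<^sup>2"
    using ev by (intro eventually_ball_finite[OF fin]) blast
  obtain h where h: "\<forall>i\<in>J. (norm (s - x i))\<^sup>2 + (2 * a i * h + K * h\<^sup>2) < R\<^sup>2"
    using eventually_happens'[OF _ evall] trivial_limit_at_right_real by blast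
  obtain i0 where i0: "i0 \<in> J" "maxdist x J (s + h *\<^sub>R v) = norm (s + h *\<^sub>R v - x i0)"
    using maxdist_in[OF fin ne] by blast
  have "P x J (s + h *\<^sub>R v) = (\<Sum>k\<in>J. (norm (s + h *\<^sub>R v - x k))\<^sup>2) + (norm (s + h *\<^sub>R v - x i0))\<^sup>2"
    unfolding P_def i0(2) ..
  also have "\<dots> = (\<Sum>k\<in>J. (norm (s - x k))\<^sup>2) + (norm (s - x i0))\<^sup>2 + (2 * a i0 * h + K * h\<^sup>2)"
  proof -
    have e1: "inner ((real (card J) + 1) *\<^sub>R s - sum x J - x i0) (h *\<^sub>R v) = a i0 * h"
      unfolding a_def by simp
    have e2: "(norm (h *\<^sub>R v))\<^sup>2 = h\<^sup>2 * (norm v)\<^sup>2"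
      by (simp add: power_mult_distrib)
    show ?thesis unfolding expand[OF fin] e1 e2 K_def by (simp add: algebra_simps)
  qed
  also have "\<dots> < (\<Sum>k\<in>J. (norm (s - x k))\<^sup>2) + R\<^sup>2"
  proof -
    have "(norm (s - x i0))\<^sup>2 + (2 * a i0 * h + K * h\<^sup>2) < R\<^sup>2" using h i0(1) by blast
    then show ?thesis by linarith
  qed
  also have "\<dots> = P x J s" unfolding P_def R_def ..
  finally show ?thesis by blast
qed


lemma Mj_scale:
  "(real (card J) + 1) *\<^sub>R Mj x J j = x j + sum x J"
  unfolding Mj_def by (simp add: add_nonneg_eq_0_iff)

lemma three_imp_s:
  fixes x :: "'j \<Rightarrow> real^2"
  assumes fin: "finite J" and ne: "J \<noteq> {}" and smin: "\<forall>t. P x J s \<le> P x J t"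
    and j: "j \<in> J" and V: "Mj x J j \<in> Vreg x J j"
  shows "s = Mj x J j"
proof -
  define M where "M = Mj x J j"
  have m: "maxdist x J M = norm (M - x j)" using V unfolding Vreg_def M_def by simp
  have z: "(real (card J) + 1) *\<^sub>R M - sum x J - x j = 0"
    unfolding M_def Mj_scale by simp
  have id: "(\<Sum>k\<in>J. (norm (s - x k))\<^sup>2) + (norm (s - x j))\<^sup>2
     = (\<Sum>k\<in>J. (norm (M - x k))\<^sup>2) + (norm (M - x j))\<^sup>2 + (real (card J) + 1) * (norm (s - M))\<^sup>2"
    using expand[OF fin, of M "s - M" x j] unfolding z by simp
  have "norm (s - x j) \<le> maxdist x J s" by (rule maxdist_ge[OF fin j])
  then have "(norm (s - x j))\<^sup>2 \<le> (maxdist x J s)\<^sup>2" by (intro power_mono) auto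
  then have "(\<Sum>k\<in>J. (norm (s - x k))\<^sup>2) + (norm (s - x j))\<^sup>2 \<le> P x J s"
    unfolding P_def by simp
  also have "\<dots> \<le> P x J M" using smin by blast
  also have "\<dots> = (\<Sum>k\<in>J. (norm (M - x k))\<^sup>2) + (norm (M - x j))\<^sup>2"
    unfolding P_def m ..
  finally have "(real (card J) + 1) * (norm (s - M))\<^sup>2 \<le> 0" using id by linarith
  moreover have "0 \<le> (real (card J) + 1) * (norm (s - M))\<^sup>2" by simp
  ultimately have "(real (card J) + 1) * (norm (s - M))\<^sup>2 = 0" by linarith
  then have "norm (s - M) = 0" by (simp add: add_nonneg_eq_0_iff)
  then show ?thesis unfolding M_def by simp
qed

lemma Mj_centroid:
  assumes fin: "finite J" and ne: "J \<noteq> {}"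
  shows "Mj x J j = centroid x J + (1 / (real (card J) + 1)) *\<^sub>R (x j - centroid x J)"
proof -
  define n where "n = real (card J)"
  have n: "n > 0" using fin ne unfolding n_def by (simp add: card_gt_0_iff)
  define C where "C = centroid x J"
  have nC: "n *\<^sub>R C = sum x J"
  proof -
    have "n *\<^sub>R C = (n * (1 / n)) *\<^sub>R sum x J" by (simp add: C_def centroid_def n_def)
    then show ?thesis using n by simp
  qed
  have "(n + 1) *\<^sub>R (C + (1 / (n + 1)) *\<^sub>R (x j - C)) = n *\<^sub>R C + x j"
    using n by (simp add: scaleR_add_right scaleR_add_left algebra_simps)
  also have "\<dots> = x j + sum x J" using nC by (simp add: add.commute)
  also have "\<dots> = (n + 1) *\<^sub>R Mj x J j" unfolding n_def Mj_scale ..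
  finally have eq: "(n + 1) *\<^sub>R (C + (1 / (n + 1)) *\<^sub>R (x j - C)) = (n + 1) *\<^sub>R Mj x J j" .
  have nz: "n + 1 \<noteq> 0" using n by simp
  have "C + (1 / (n + 1)) *\<^sub>R (x j - C) = Mj x J j" using eq nz scaleR_cancel_left by blast
  then show ?thesis unfolding C_def n_def by simp
qed


lemma sum_single:
  fixes f :: "'a \<Rightarrow> 'b::comm_monoid_add"
  assumes "finite J" "j \<in> J" "\<forall>i\<in>J. i \<noteq> j \<longrightarrow> f i = 0"
  shows "sum f J = f j"
proof -
  have "sum f {j} = sum f J"
    using assms by (intro sum.mono_neutral_left) auto
  then show ?thesis by simp
qed

lemma key1:
  fixes d e :: "real^2"
  assumes t: "0 < t" "t < 1" and le: "norm (t *\<^sub>R d - e) \<le> norm (t *\<^sub>R d - d)" and ne: "e \<noteq> d"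
  shows "norm e < norm d"
proof -
  have "(norm (t *\<^sub>R d - e))\<^sup>2 \<le> (norm (t *\<^sub>R d - d))\<^sup>2"
    using le by (intro power_mono) auto
  moreover have "(norm (t *\<^sub>R d - e))\<^sup>2 = t * t * (d \<bullet> d) - 2 * (t * (d \<bullet> e)) + e \<bullet> e"
    by (simp add: power2_norm_eq_inner inner_diff_left inner_diff_right inner_commute algebra_simps)
  moreover have "(norm (t *\<^sub>R d - d))\<^sup>2 = t * t * (d \<bullet> d) - 2 * (t * (d \<bullet> d)) + d \<bullet> d"
    by (simp add: power2_norm_eq_inner inner_diff_left inner_diff_right inner_commute algebra_simps)
  ultimately have A: "e \<bullet> e - d \<bullet> d \<le> 2 * (t * (d \<bullet> e - d \<bullet> d))"
    by (simp add: algebra_simps)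
  have B: "0 < (norm (d - e))\<^sup>2" using ne by simp
  have B': "(norm (d - e))\<^sup>2 = d \<bullet> d - 2 * (d \<bullet> e) + e \<bullet> e"
    by (simp add: power2_norm_eq_inner inner_diff_left inner_diff_right inner_commute)
  have "e \<bullet> e < d \<bullet> d"
  proof (rule ccontr)
    assume "\<not> e \<bullet> e < d \<bullet> d"
    then have "0 \<le> t * (d \<bullet> e - d \<bullet> d)" using A by linarith
    then have p: "0 \<le> d \<bullet> e - d \<bullet> d" using t by (simp add: zero_le_mult_iff)
    then have "t * (d \<bullet> e - d \<bullet> d) \<le> 1 * (d \<bullet> e - d \<bullet> d)"
      using t by (intro mult_right_mono) auto
    then have "t * (d \<bullet> e - d \<bullet> d) \<le> d \<bullet> e - d \<bullet> d" by simp
    then show False using A B B' p by linarith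
  qed
  then have "(norm e)\<^sup>2 < (norm d)\<^sup>2" by (simp add: power2_norm_eq_inner)
  then show ?thesis by (rule power2_less_imp_less) simp
qed

lemma key2:
  fixes d e :: "real^2"
  assumes le: "norm e \<le> norm d" and ne: "e \<noteq> d"
  shows "e \<bullet> d < d \<bullet> d"
proof -
  have "(norm e)\<^sup>2 \<le> (norm d)\<^sup>2" using le by (intro power_mono) auto
  then have E: "e \<bullet> e \<le> d \<bullet> d" by (simp add: power2_norm_eq_inner)
  have B: "0 < (norm (d - e))\<^sup>2" using ne by simp
  have B': "(norm (d - e))\<^sup>2 = d \<bullet> d - 2 * (e \<bullet> d) + e \<bullet> e"
    by (simp add: power2_norm_eq_inner inner_diff_left inner_diff_right inner_commute)
  show ?thesis using E B B' by linarith
qed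

lemma three_imp_r:
  fixes x :: "'j \<Rightarrow> real^2"
  assumes fin: "finite J" and ne: "J \<noteq> {}" and inj: "inj_on x J"
    and j: "j \<in> J" and V: "Mj x J j \<in> Vreg x J j"
    and r: "r \<in> J" and far: "\<forall>i\<in>J. norm (x i - centroid x J) \<le> norm (x r - centroid x J)"
  shows "j = r"
proof (rule ccontr)
  assume jr: "j \<noteq> r"
  define C where "C = centroid x J"
  define t where "t = 1 / (real (card J) + 1)"
  have t: "0 < t" "t < 1" using fin ne unfolding t_def by (auto simp: card_gt_0_iff)
  have MC: "Mj x J j = C + t *\<^sub>R (x j - C)" unfolding C_def t_def by (rule Mj_centroid[OF fin ne])
  have "norm (Mj x J j - x r) \<le> maxdist x J (Mj x J j)" by (rule maxdist_ge[OF fin r])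
  also have "\<dots> = norm (Mj x J j - x j)" using V unfolding Vreg_def by simp
  finally have le: "norm (t *\<^sub>R (x j - C) - (x r - C)) \<le> norm (t *\<^sub>R (x j - C) - (x j - C))"
    unfolding MC by (simp add: algebra_simps)
  have "x r \<noteq> x j" using inj jr j r by (auto dest: inj_onD)
  then have "x r - C \<noteq> x j - C" by simp
  from key1[OF t le this] have "norm (x r - C) < norm (x j - C)" .
  moreover have "norm (x j - C) \<le> norm (x r - C)" using far j unfolding C_def by blast
  ultimately show False by linarith
qed

lemma two_imp_three:
  fixes x :: "'j \<Rightarrow> real^2"
  assumes fin: "finite J" and ne: "J \<noteq> {}" and inj: "inj_on x J"
    and smin: "\<forall>t. P x J s \<le> P x J t"
    and r: "r \<in> J" and far: "\<forall>i\<in>J. norm (x i - centroid x J) \<le> norm (x r - centroid x J)"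
    and sr: "s = Mj x J r"
  shows "Mj x J r \<in> Vreg x J r"
proof (rule ccontr)
  assume nV: "Mj x J r \<notin> Vreg x J r"
  define C where "C = centroid x J"
  have "\<exists>t. P x J t < P x J s"
  proof (rule descent[OF fin ne, where v = "C - x r"], intro ballI impI)
    fix i assume i: "i \<in> J" and act: "norm (s - x i) = maxdist x J s"
    have ir: "i \<noteq> r" using act nV sr unfolding Vreg_def by auto
    have "(real (card J) + 1) *\<^sub>R s - sum x J - x i = (x r - C) - (x i - C)"
      unfolding sr Mj_scale by simp
    then have eq: "inner ((real (card J) + 1) *\<^sub>R s - sum x J - x i) (C - x r)
        = (x i - C) \<bullet> (x r - C) - (x r - C) \<bullet> (x r - C)"
      by (simp add: inner_diff_left inner_diff_right inner_commute algebra_simps)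
    have "x i \<noteq> x r" using inj ir i r by (auto dest: inj_onD)
    then have "x i - C \<noteq> x r - C" by simp
    from key2[OF _ this] far i
    have "(x i - C) \<bullet> (x r - C) < (x r - C) \<bullet> (x r - C)" unfolding C_def by blast
    then show "inner ((real (card J) + 1) *\<^sub>R s - sum x J - x i) (C - x r) < 0"
      unfolding eq by simp
  qed
  then show False using smin by (meson not_le)
qed


lemma Mj_inj:
  assumes "inj_on x J"
  shows "inj_on (Mj x J) J"
proof (rule inj_onI)
  fix i j assume i: "i \<in> J" and j: "j \<in> J" and eq: "Mj x J i = Mj x J j"
  have "x i + sum x J = x j + sum x J"
    using arg_cong[OF eq, of "\<lambda>y. (real (card J) + 1) *\<^sub>R y"] unfolding Mj_scale .
  then have "x i = x j" by simp
  then show "i = j" using assms i j by (auto dest: inj_onD)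
qed

lemma kkt_exists:
  fixes x :: "'j \<Rightarrow> real^2"
  assumes fin: "finite J" and ne: "J \<noteq> {}" and inj: "inj_on x J"
    and smin: "\<forall>t. P x J s \<le> P x J t"
  shows "\<exists>lam. is_KKT x J s lam"
proof -
  define A where "A = {i\<in>J. norm (s - x i) = maxdist x J s}"
  define Q where "Q = Mj x J ` A"
  have finA: "finite A" using fin unfolding A_def by simp
  have AJ: "A \<subseteq> J" unfolding A_def by auto
  have finQ: "finite Q" using finA unfolding Q_def by simp
  have injA: "inj_on (Mj x J) A" using Mj_inj[OF inj] AJ by (rule inj_on_subset)
  show ?thesis
  proof (cases "s \<in> convex hull Q")
    case True
    then obtain u where u: "\<forall>y\<in>Q. 0 \<le> u y" "sum u Q = 1" "(\<Sum>y\<in>Q. u y *\<^sub>R y) = s"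
      unfolding convex_hull_finite[OF finQ] by blast
    define lam where "lam i = (if i \<in> A then u (Mj x J i) else 0)" for i
    have s1: "sum lam J = sum lam A"
      using fin AJ by (intro sum.mono_neutral_right) (auto simp: lam_def)
    have s2: "sum lam A = sum u Q"
      unfolding Q_def sum.reindex[OF injA] by (simp add: lam_def)
    have v1: "(\<Sum>j\<in>J. lam j *\<^sub>R Mj x J j) = (\<Sum>j\<in>A. lam j *\<^sub>R Mj x J j)"
      using fin AJ by (intro sum.mono_neutral_right) (auto simp: lam_def)
    have v2: "(\<Sum>j\<in>A. lam j *\<^sub>R Mj x J j) = (\<Sum>y\<in>Q. u y *\<^sub>R y)"
      unfolding Q_def sum.reindex[OF injA] by (simp add: lam_def)
    have "is_KKT x J s lam"
      unfolding is_KKT_def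
    proof (intro conjI ballI)
      fix j assume "j \<in> J"
      show "0 \<le> lam j" using u(1) unfolding lam_def Q_def by auto
      show "lam j * (norm (s - x j) - maxdist x J s) = 0"
        unfolding lam_def A_def by auto
    next
      show "sum lam J = 1" using s1 s2 u(2) by simp
      show "s = (\<Sum>j\<in>J. lam j *\<^sub>R Mj x J j)" using v1 v2 u(3) by simp
    qed
    then show ?thesis by blast
  next
    case False
    have "convex (convex hull Q)" by simp
    moreover have "closed (convex hull Q)"
      using finite_imp_compact_convex_hull[OF finQ] by (rule compact_imp_closed)
    ultimately obtain a b where ab: "inner a s < b" "\<forall>y\<in>convex hull Q. b < inner a y"
      using separating_hyperplane_closed_point[OF _ _ False] by blast
    have "\<exists>t. P x J t < P x J s"
    proof (rule descent[OF fin ne, where v = a], intro ballI impI)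
      fix i assume i: "i \<in> J" and act: "norm (s - x i) = maxdist x J s"
      then have "Mj x J i \<in> convex hull Q"
        unfolding Q_def A_def by (intro hull_inc) auto
      then have lt: "inner a s < inner a (Mj x J i)" using ab by force
      have "(real (card J) + 1) *\<^sub>R s - sum x J - x i = (real (card J) + 1) *\<^sub>R (s - Mj x J i)"
        unfolding scaleR_diff_right Mj_scale by simp
      then have "inner ((real (card J) + 1) *\<^sub>R s - sum x J - x i) a
          = (real (card J) + 1) * (inner a s - inner a (Mj x J i))"
      proof -
        assume h: "(real (card J) + 1) *\<^sub>R s - sum x J - x i = (real (card J) + 1) *\<^sub>R (s - Mj x J i)"
        have "inner ((real (card J) + 1) *\<^sub>R s - sum x J - x i) a = inner a ((real (card J) + 1) *\<^sub>R (s - Mj x J i))"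
          unfolding h by (rule inner_commute)
        then show ?thesis by (simp add: inner_diff_right)
      qed
      moreover have "(real (card J) + 1) * (inner a s - inner a (Mj x J i)) < 0"
        using lt by (intro mult_pos_neg) auto
      ultimately show "inner ((real (card J) + 1) *\<^sub>R s - sum x J - x i) a < 0" by simp
    qed
    then show ?thesis using smin by (meson not_le)
  qed
qed

theorem proposition1:
  fixes x :: "'j \<Rightarrow> real^2" and J :: "'j set" and s :: "real^2" and r :: 'j
  assumes "finite J" and "J \<noteq> {}" and "inj_on x J"
    and smin: "\<forall>t. P x J s \<le> P x J t"
    and "r \<in> J" and far: "\<forall>i\<in>J. norm (x i - centroid x J) \<le> norm (x r - centroid x J)"
  shows "(Lambda_card x J s = 1 \<longleftrightarrow> s = Mj x J r)
       \<and> (s = Mj x J r \<longleftrightarrow> (\<exists>j\<in>J. Mj x J j \<in> Vreg x J j))"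
proof -
  note fin = assms(1) and ne = assms(2) and inj = assms(3) and r = assms(5)
  have K3: "s = Mj x J r \<longleftrightarrow> (\<exists>j\<in>J. Mj x J j \<in> Vreg x J j)"
  proof
    assume "s = Mj x J r"
    then show "\<exists>j\<in>J. Mj x J j \<in> Vreg x J j"
      using two_imp_three[OF fin ne inj smin r far] r by blast
  next
    assume "\<exists>j\<in>J. Mj x J j \<in> Vreg x J j"
    then obtain j where j: "j \<in> J" "Mj x J j \<in> Vreg x J j" by blast
    have "s = Mj x J j" by (rule three_imp_s[OF fin ne smin j])
    moreover have "j = r" by (rule three_imp_r[OF fin ne inj j r far])
    ultimately show "s = Mj x J r" by simp
  qed
  define Pk where "Pk k = (\<exists>lam. is_KKT x J s lam \<and> card {j\<in>J. lam j \<noteq> 0} = k)" for k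
  have LC: "Lambda_card x J s = (LEAST k. Pk k)" unfolding Lambda_card_def Pk_def ..
  have pos: "1 \<le> k" if Pk: "Pk k" for k
  proof (rule ccontr)
    assume "\<not> 1 \<le> k"
    then have k0: "k = 0" by simp
    obtain lam where lam: "is_KKT x J s lam" "card {j\<in>J. lam j \<noteq> 0} = k"
      using Pk unfolding Pk_def by blast
    have "{j\<in>J. lam j \<noteq> 0} = {}" using lam(2) k0 fin by simp
    then have "sum lam J = 0" by (intro sum.neutral) auto
    then show False using lam(1) unfolding is_KKT_def by simp
  qed
  have L: "Lambda_card x J s = 1 \<longleftrightarrow> s = Mj x J r"
  proof
    assume sr: "s = Mj x J r"
    have V: "Mj x J r \<in> Vreg x J r" by (rule two_imp_three[OF fin ne inj smin r far sr])
    define lam0 where "lam0 i = (if i = r then 1 else (0::real))" for i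
    have "is_KKT x J s lam0"
      unfolding is_KKT_def
    proof (intro conjI ballI)
      fix j assume "j \<in> J"
      show "0 \<le> lam0 j" unfolding lam0_def by simp
      show "lam0 j * (norm (s - x j) - maxdist x J s) = 0"
        using V sr unfolding lam0_def Vreg_def by auto
    next
      show "sum lam0 J = 1" using sum_single[OF fin r, of lam0] unfolding lam0_def by simp
      have "(\<Sum>j\<in>J. lam0 j *\<^sub>R Mj x J j) = lam0 r *\<^sub>R Mj x J r"
        by (rule sum_single[OF fin r]) (simp add: lam0_def)
      then show "s = (\<Sum>j\<in>J. lam0 j *\<^sub>R Mj x J j)" using sr by (simp add: lam0_def)
    qed
    moreover have "{j\<in>J. lam0 j \<noteq> 0} = {r}" using r unfolding lam0_def by auto
    ultimately have "Pk 1" unfolding Pk_def by force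
    then show "Lambda_card x J s = 1" unfolding LC
    proof (rule Least_equality)
      fix y assume "Pk y" then show "1 \<le> y" by (rule pos)
    qed
  next
    assume L1: "Lambda_card x J s = 1"
    obtain lam where "is_KKT x J s lam" using kkt_exists[OF fin ne inj smin] by blast
    then have "Pk (card {j\<in>J. lam j \<noteq> 0})" unfolding Pk_def by blast
    then have "Pk (LEAST k. Pk k)" by (rule LeastI)
    then have "Pk 1" using LC L1 by simp
    then obtain lam1 where lam1: "is_KKT x J s lam1" "card {j\<in>J. lam1 j \<noteq> 0} = 1"
      unfolding Pk_def by blast
    obtain j where j: "{j\<in>J. lam1 j \<noteq> 0} = {j}" using card_1_singletonE[OF lam1(2)] by blast
    then have jJ: "j \<in> J" and lj: "lam1 j \<noteq> 0" and oth: "\<forall>i\<in>J. i \<noteq> j \<longrightarrow> lam1 i = 0"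
      by auto
    have "sum lam1 J = lam1 j" by (rule sum_single[OF fin jJ oth])
    then have l1: "lam1 j = 1" using lam1(1) unfolding is_KKT_def by simp
    have "(\<Sum>i\<in>J. lam1 i *\<^sub>R Mj x J i) = lam1 j *\<^sub>R Mj x J j"
      by (rule sum_single[OF fin jJ]) (simp add: oth)
    then have sj: "s = Mj x J j" using lam1(1) l1 unfolding is_KKT_def by simp
    have "lam1 j * (norm (s - x j) - maxdist x J s) = 0" using lam1(1) jJ unfolding is_KKT_def by blast
    then have "norm (s - x j) = maxdist x J s" using l1 by simp
    then have "Mj x J j \<in> Vreg x J j" unfolding Vreg_def sj by simp
    then show "s = Mj x J r" using K3 jJ by blast
  qed
  show ?thesis using L K3 by blast
qed

end
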